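(* Let $(X_t)_{t\ge1}$ be i.i.d. random variables in $[0,1]$ with variance $\sigma^2>0$, and fix $\alpha\in(0,1)$. Define $\widehat\mu_0=1/2$ and $\widehat\sigma_0^2=1/4$, and for $t\ge1$ \[ \widehat\mu_t=\frac{1/2+\sum_{i\le t}X_i}{t+1},\qquad \widehat\sigma_t^2=\frac{1/4+\sum_{i\le t}(X_i-\widehat\mu_i)^2}{t+1},\qquad \lambda_t=\sqrt{\frac{2\log(2/\alpha)}{\widehat\sigma_{t-1}^2\,t\log(1+t)}}\wedge\frac12 . \] Let \[ W_t^{\mathrm{WSR}}=\frac{\log(2/\alpha)+\sum_{i\le t}(X_i-\widehat\mu_{i-1})^2\psi_E(\lambda_i)}{\sum_{i\le t}\lambda_i}. \] Then, almost surely, \[ W_t^{\mathrm{WSR}}\sim\frac{\sigma}{2}\sqrt{\frac{\log(2/\alpha)\log t}{2t}}\,\big(1+\log\log t\big). \]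
   Context: $\psi_E(x)=-\log(1-x)-x$ for $x\in[0,1)$. For (possibly random) sequences, $f(t)\sim g(t)$ means $f(t)/g(t)\to1$ as $t\to\infty$ (almost surely). *)

theory Defs
  imports "HOL-Probability.Probability" "HOL-Library.Landau_Symbols"
begin

definition psiE :: "real \<Rightarrow> real" where
  "psiE x = - ln (1 - x) - x"

definition mu_hat :: "(nat \<Rightarrow> 'a \<Rightarrow> real) \<Rightarrow> nat \<Rightarrow> 'a \<Rightarrow> real" where
  "mu_hat X t \<omega> = (1/2 + (\<Sum>i\<in>{1..t}. X i \<omega>)) / (real t + 1)"

definition sigma2_hat :: "(nat \<Rightarrow> 'a \<Rightarrow> real) \<Rightarrow> nat \<Rightarrow> 'a \<Rightarrow> real" where
  "sigma2_hat X t \<omega> = (1/4 + (\<Sum>i\<in>{1..t}. (X i \<omega> - mu_hat X i \<omega>)^2)) / (real t + 1)"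

definition lambda_wsr :: "real \<Rightarrow> (nat \<Rightarrow> 'a \<Rightarrow> real) \<Rightarrow> nat \<Rightarrow> 'a \<Rightarrow> real" where
  "lambda_wsr \<alpha> X t \<omega> =
     min (sqrt (2 * ln (2 / \<alpha>) / (sigma2_hat X (t - 1) \<omega> * real t * ln (1 + real t)))) (1/2)"

definition W_wsr :: "real \<Rightarrow> (nat \<Rightarrow> 'a \<Rightarrow> real) \<Rightarrow> nat \<Rightarrow> 'a \<Rightarrow> real" where
  "W_wsr \<alpha> X t \<omega> =
     (ln (2 / \<alpha>) + (\<Sum>i\<in>{1..t}. (X i \<omega> - mu_hat X (i - 1) \<omega>)^2 * psiE (lambda_wsr \<alpha> X i \<omega>)))
     / (\<Sum>i\<in>{1..t}. lambda_wsr \<alpha> X i \<omega>)"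

end

theory Submission
  imports Defs "HOL-Real_Asymp.Real_Asymp"
begin


lemma sum_ratio_tendsto:
  fixes a b c :: "nat \<Rightarrow> real"
  assumes c: "c \<longlonglongrightarrow> l" and b: "eventually (\<lambda>i. b i \<ge> 0) sequentially"
    and ab: "eventually (\<lambda>i. a i = c i * b i) sequentially"
    and B: "filterlim (\<lambda>t. \<Sum>i\<in>{1..t}. b i) at_top sequentially"
  shows "(\<lambda>t. (\<Sum>i\<in>{1..t}. a i) / (\<Sum>i\<in>{1..t}. b i)) \<longlonglongrightarrow> l"
proof (rule LIMSEQ_I)
  fix r :: real assume r: "r > 0"
  have "eventually (\<lambda>i. dist (c i) l < r/2) sequentially"
    using c r by (intro tendstoD) auto
  with b ab have "eventually (\<lambda>i. b i \<ge> 0 \<and> a i = c i * b i \<and> \<bar>c i - l\<bar> < r/2) sequentially"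
    by eventually_elim (auto simp: dist_real_def)
  then obtain N where N: "\<And>i. i \<ge> N \<Longrightarrow> b i \<ge> 0 \<and> a i = c i * b i \<and> \<bar>c i - l\<bar> < r/2"
    by (auto simp: eventually_sequentially)
  define K where "K = (\<Sum>i\<in>{1..N}. \<bar>a i - l * b i\<bar>) + r/2 * (\<Sum>i\<in>{1..N}. \<bar>b i\<bar>)"
  have "eventually (\<lambda>t. (\<Sum>i\<in>{1..t}. b i) \<ge> max 1 (2 * K / r + 1)) sequentially"
    using B unfolding filterlim_at_top by (rule allE)
  then obtain N2 where N2: "\<And>t. t \<ge> N2 \<Longrightarrow> (\<Sum>i\<in>{1..t}. b i) \<ge> max 1 (2 * K / r + 1)"
    by (auto simp: eventually_sequentially)
  show "\<exists>no. \<forall>t\<ge>no. norm ((\<Sum>i\<in>{1..t}. a i) / (\<Sum>i\<in>{1..t}. b i) - l) < r"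
  proof (intro exI[of _ "max N N2"] allI impI)
    fix t assume t: "t \<ge> max N N2"
    define Bt where "Bt = (\<Sum>i\<in>{1..t}. b i)"
    have Bt: "Bt \<ge> 1" "Bt \<ge> 2 * K / r + 1" using N2[of t] t by (auto simp: Bt_def)
    have split: "{1..t} = {1..N} \<union> {N<..t}" using t by auto
    have disj: "{1..N} \<inter> {N<..t} = {}" by auto
    have s1: "(\<Sum>i\<in>{1..t}. a i - l * b i) = (\<Sum>i\<in>{1..N}. a i - l * b i) + (\<Sum>i\<in>{N<..t}. a i - l * b i)"
      unfolding split by (rule sum.union_disjoint) auto
    have sb: "(\<Sum>i\<in>{1..t}. b i) = (\<Sum>i\<in>{1..N}. b i) + (\<Sum>i\<in>{N<..t}. b i)"
      unfolding split by (rule sum.union_disjoint) auto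
    have e1: "\<bar>\<Sum>i\<in>{1..N}. a i - l * b i\<bar> \<le> (\<Sum>i\<in>{1..N}. \<bar>a i - l * b i\<bar>)"
      by (rule sum_abs)
    have e2: "\<bar>\<Sum>i\<in>{N<..t}. a i - l * b i\<bar> \<le> (\<Sum>i\<in>{N<..t}. r/2 * b i)"
    proof -
      have "\<bar>\<Sum>i\<in>{N<..t}. a i - l * b i\<bar> \<le> (\<Sum>i\<in>{N<..t}. \<bar>a i - l * b i\<bar>)" by (rule sum_abs)
      also have "\<dots> \<le> (\<Sum>i\<in>{N<..t}. r/2 * b i)"
      proof (rule sum_mono)
        fix i assume "i \<in> {N<..t}"
        then have h: "b i \<ge> 0 \<and> a i = c i * b i \<and> \<bar>c i - l\<bar> < r/2" using N by auto
        then have "a i - l * b i = (c i - l) * b i" by (simp add: left_diff_distrib)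
        then have "\<bar>a i - l * b i\<bar> = \<bar>c i - l\<bar> * b i" using h by (simp add: abs_mult)
        also have "\<dots> \<le> r/2 * b i" using h by (intro mult_right_mono) auto
        finally show "\<bar>a i - l * b i\<bar> \<le> r/2 * b i" .
      qed
      finally show ?thesis .
    qed
    have e3: "(\<Sum>i\<in>{N<..t}. r/2 * b i) \<le> r/2 * (Bt + (\<Sum>i\<in>{1..N}. \<bar>b i\<bar>))"
    proof -
      have "(\<Sum>i\<in>{1..N}. - b i) \<le> (\<Sum>i\<in>{1..N}. \<bar>b i\<bar>)" by (intro sum_mono) auto
      then have "(\<Sum>i\<in>{N<..t}. b i) \<le> Bt + (\<Sum>i\<in>{1..N}. \<bar>b i\<bar>)"
        using sb by (simp add: Bt_def sum_negf)
      then have "r/2 * (\<Sum>i\<in>{N<..t}. b i) \<le> r/2 * (Bt + (\<Sum>i\<in>{1..N}. \<bar>b i\<bar>))"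
        using r by (intro mult_left_mono) auto
      then show ?thesis by (simp only: sum_distrib_left)
    qed
    have "\<bar>(\<Sum>i\<in>{1..t}. a i) - l * Bt\<bar> = \<bar>\<Sum>i\<in>{1..t}. a i - l * b i\<bar>"
      by (simp add: Bt_def sum_subtractf sum_distrib_left)
    also have "\<dots> \<le> K + r/2 * Bt"
      using e1 e2 e3 distrib_left[of "r/2" Bt "\<Sum>i\<in>{1..N}. \<bar>b i\<bar>"] abs_triangle_ineq[of "\<Sum>i\<in>{1..N}. a i - l * b i" "\<Sum>i\<in>{N<..t}. a i - l * b i"]
      unfolding K_def s1 by linarith
    also have "\<dots> < r * Bt"
    proof -
      have "2 * K / r < Bt" using Bt by linarith
      then have "2 * K < r * Bt" using r by (simp add: field_simps)
      then show ?thesis by simp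
    qed
    finally have "\<bar>(\<Sum>i\<in>{1..t}. a i) - l * Bt\<bar> < r * Bt" .
    then have "\<bar>(\<Sum>i\<in>{1..t}. a i) / Bt - l\<bar> < r"
      using Bt(1) by (simp add: field_simps abs_divide)
    then show "norm ((\<Sum>i\<in>{1..t}. a i) / (\<Sum>i\<in>{1..t}. b i) - l) < r"
      by (simp add: Bt_def)
  qed
qed

lemma weighted_cesaro:
  fixes Y w :: "nat \<Rightarrow> real"
  assumes Y: "(\<lambda>t. (\<Sum>i\<in>{1..t}. Y i) / real t) \<longlonglongrightarrow> l"
    and wpos: "\<And>i. i \<ge> 1 \<Longrightarrow> w i > 0"
    and wdec: "\<And>i. i \<ge> 1 \<Longrightarrow> w (Suc i) \<le> w i"
    and W: "filterlim (\<lambda>t. \<Sum>i\<in>{1..t}. w i) at_top sequentially"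
  shows "(\<lambda>t. (\<Sum>i\<in>{1..t}. Y i * w i) / (\<Sum>i\<in>{1..t}. w i)) \<longlonglongrightarrow> l"
proof -
  define U where "U t = (\<Sum>i\<in>{1..t}. Y i - l)" for t
  define Wt where "Wt t = (\<Sum>i\<in>{1..t}. w i)" for t
  have U0: "U 0 = 0" by (simp add: U_def)
  have USuc: "U (Suc t) = U t + (Y (Suc t) - l)" for t by (simp add: U_def)
  have "eventually (\<lambda>t. (\<Sum>i\<in>{1..t}. Y i) / real t - l = U t / real t) sequentially"
    using eventually_ge_at_top[of "1::nat"]
    by eventually_elim (simp add: U_def sum_subtractf field_simps)
  moreover have "(\<lambda>t. (\<Sum>i\<in>{1..t}. Y i) / real t - l) \<longlonglongrightarrow> 0"
    using tendsto_diff[OF Y tendsto_const[of l]] by simp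
  ultimately have Ut: "(\<lambda>t. U t / real t) \<longlonglongrightarrow> 0"
    by (rule Lim_transform_eventually[rotated])
  have abel: "(\<Sum>i\<in>{1..t}. (Y i - l) * w i) = U t * w t + (\<Sum>j<t. (w j - w (Suc j)) * U j)" for t
  proof (induction t)
    case 0 then show ?case by (simp add: U0)
  next
    case (Suc t)
    have "(\<Sum>i\<in>{1..Suc t}. (Y i - l) * w i) = (\<Sum>i\<in>{1..t}. (Y i - l) * w i) + (Y (Suc t) - l) * w (Suc t)"
      by simp
    also have "\<dots> = U (Suc t) * w (Suc t) + (\<Sum>j<Suc t. (w j - w (Suc j)) * U j)"
      unfolding Suc USuc by (simp add: algebra_simps)
    finally show ?case .
  qed
  have tele: "(\<Sum>j<t. real j * (w j - w (Suc j))) = Wt t - real t * w t" for t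
    by (induction t) (simp_all add: Wt_def algebra_simps)
  have mono: "w j \<le> w i" if "1 \<le> i" "i \<le> j" for i j
    using that(2)
  proof (induction j rule: dec_induct)
    case base then show ?case by simp
  next
    case (step j) then show ?case using wdec[of j] that(1) by simp
  qed
  have twt: "real t * w t \<le> Wt t" for t
  proof -
    have "(\<Sum>i\<in>{1..t}. w t) \<le> (\<Sum>i\<in>{1..t}. w i)" by (intro sum_mono mono) auto
    then show ?thesis by (simp add: Wt_def)
  qed
  have jnn: "real j * (w j - w (Suc j)) \<ge> 0" for j
    using wdec[of j] by (cases "j = 0") auto
  have main: "(\<lambda>t. (\<Sum>i\<in>{1..t}. (Y i - l) * w i) / Wt t) \<longlonglongrightarrow> 0"
  proof (rule LIMSEQ_I)
    fix r :: real assume r: "r > 0"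
    define \<epsilon> where "\<epsilon> = r / 4"
    have \<epsilon>: "\<epsilon> > 0" using r by (simp add: \<epsilon>_def)
    have "eventually (\<lambda>t. dist (U t / real t) 0 < \<epsilon>) sequentially"
      using Ut \<epsilon> by (intro tendstoD) auto
    then obtain N0 where N0: "\<And>t. t \<ge> N0 \<Longrightarrow> \<bar>U t / real t\<bar> < \<epsilon>"
      by (auto simp: eventually_sequentially)
    define N where "N = max 1 N0"
    have UN: "\<bar>U j\<bar> \<le> \<epsilon> * real j" if "j \<ge> N" for j
    proof -
      have "j \<ge> 1" "j \<ge> N0" using that by (auto simp: N_def)
      then have "\<bar>U j\<bar> / real j < \<epsilon>" using N0[of j] by (simp add: abs_divide)
      then show ?thesis using \<open>j \<ge> 1\<close> by (simp add: field_simps)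
    qed
    define C where "C = (\<Sum>j<N. \<bar>(w j - w (Suc j)) * U j\<bar>)"
    have "eventually (\<lambda>t. Wt t \<ge> max 1 (2 * C / r + 1)) sequentially"
      using W unfolding filterlim_at_top Wt_def by (rule allE)
    then obtain N2 where N2: "\<And>t. t \<ge> N2 \<Longrightarrow> Wt t \<ge> max 1 (2 * C / r + 1)"
      by (auto simp: eventually_sequentially)
    show "\<exists>no. \<forall>t\<ge>no. norm ((\<Sum>i\<in>{1..t}. (Y i - l) * w i) / Wt t - 0) < r"
    proof (intro exI[of _ "max N N2"] allI impI)
      fix t assume t: "t \<ge> max N N2"
      have Wt1: "Wt t \<ge> 1" "Wt t \<ge> 2 * C / r + 1" using N2[of t] t by auto
      have e1: "\<bar>U t * w t\<bar> \<le> \<epsilon> * Wt t"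
      proof -
        have "w t > 0" using wpos[of t] t by (auto simp: N_def)
        then have "\<bar>U t * w t\<bar> = \<bar>U t\<bar> * w t" by (simp add: abs_mult)
        also have "\<dots> \<le> \<epsilon> * real t * w t" using UN[of t] t \<open>w t > 0\<close> by (intro mult_right_mono) auto
        also have "\<dots> \<le> \<epsilon> * Wt t" using twt[of t] \<epsilon> by (simp add: mult.assoc mult_left_mono)
        finally show ?thesis .
      qed
      have split: "{..<t} = {..<N} \<union> {N..<t}" using t by auto
      have e2: "\<bar>\<Sum>j<t. (w j - w (Suc j)) * U j\<bar> \<le> C + \<epsilon> * Wt t"
      proof -
        have "\<bar>\<Sum>j<t. (w j - w (Suc j)) * U j\<bar> \<le> (\<Sum>j<t. \<bar>(w j - w (Suc j)) * U j\<bar>)"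
          by (rule sum_abs)
        also have "\<dots> = C + (\<Sum>j\<in>{N..<t}. \<bar>(w j - w (Suc j)) * U j\<bar>)"
          unfolding split C_def by (rule sum.union_disjoint) auto
        also have "(\<Sum>j\<in>{N..<t}. \<bar>(w j - w (Suc j)) * U j\<bar>) \<le> (\<Sum>j\<in>{N..<t}. \<epsilon> * (real j * (w j - w (Suc j))))"
        proof (rule sum_mono)
          fix j assume j: "j \<in> {N..<t}"
          then have j1: "j \<ge> 1" by (auto simp: N_def)
          have d: "w j - w (Suc j) \<ge> 0" using wdec[OF j1] by simp
          have "\<bar>(w j - w (Suc j)) * U j\<bar> = (w j - w (Suc j)) * \<bar>U j\<bar>" using d by (simp add: abs_mult)
          also have "\<dots> \<le> (w j - w (Suc j)) * (\<epsilon> * real j)" using UN[of j] j d by (intro mult_left_mono) auto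
          finally show "\<bar>(w j - w (Suc j)) * U j\<bar> \<le> \<epsilon> * (real j * (w j - w (Suc j)))" by (simp add: algebra_simps)
        qed
        also have "\<dots> = \<epsilon> * (\<Sum>j\<in>{N..<t}. real j * (w j - w (Suc j)))" by (simp add: sum_distrib_left)
        also have "(\<Sum>j\<in>{N..<t}. real j * (w j - w (Suc j))) \<le> (\<Sum>j<t. real j * (w j - w (Suc j)))"
          by (rule sum_mono2) (use jnn in auto)
        also have "\<dots> \<le> Wt t" using tele[of t] twt[of t] wpos[of t] t by (simp add: N_def)
        finally show ?thesis using \<epsilon> by (simp add: mult_left_mono)
      qed
      have "\<bar>\<Sum>i\<in>{1..t}. (Y i - l) * w i\<bar> \<le> C + 2 * \<epsilon> * Wt t"
        unfolding abel using e1 e2 abs_triangle_ineq[of "U t * w t" "\<Sum>j<t. (w j - w (Suc j)) * U j"]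
        by linarith
      also have "\<dots> < r * Wt t"
      proof -
        have "2 * C / r < Wt t" using Wt1 by linarith
        then have "2 * C < r * Wt t" using r by (simp add: field_simps)
        then show ?thesis by (simp add: \<epsilon>_def)
      qed
      finally have "\<bar>\<Sum>i\<in>{1..t}. (Y i - l) * w i\<bar> < r * Wt t" .
      then show "norm ((\<Sum>i\<in>{1..t}. (Y i - l) * w i) / Wt t - 0) < r"
        using Wt1(1) by (simp add: field_simps abs_divide)
    qed
  qed
  have "eventually (\<lambda>t. Wt t \<ge> 1) sequentially"
    using W unfolding filterlim_at_top Wt_def by (rule allE)
  then have "eventually (\<lambda>t. l + (\<Sum>i\<in>{1..t}. (Y i - l) * w i) / Wt t = (\<Sum>i\<in>{1..t}. Y i * w i) / (\<Sum>i\<in>{1..t}. w i)) sequentially"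
    by eventually_elim (simp add: Wt_def field_simps sum_subtractf left_diff_distrib sum_distrib_left)
  moreover have "(\<lambda>t. l + (\<Sum>i\<in>{1..t}. (Y i - l) * w i) / Wt t) \<longlonglongrightarrow> l"
    using tendsto_add[OF tendsto_const[of l] main] by simp
  ultimately show ?thesis by (rule Lim_transform_eventually[rotated])
qed


lemma telescope_asymp:
  fixes a B :: "nat \<Rightarrow> real"
  assumes lim: "(\<lambda>i. a i / (B i - B (i - 1))) \<longlonglongrightarrow> 1"
   and pos: "eventually (\<lambda>i. B i - B (i - 1) > 0) sequentially"
   and Binf: "filterlim B at_top sequentially"
  shows "(\<lambda>t. (\<Sum>i\<in>{1..t}. a i) / B t) \<longlonglongrightarrow> 1"
proof -
  define b where "b i = B i - B (i - 1)" for i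
  have tel: "(\<Sum>i\<in>{1..t}. b i) = B t - B 0" for t
    by (induction t) (simp_all add: b_def)
  have Sinf: "filterlim (\<lambda>t. \<Sum>i\<in>{1..t}. b i) at_top sequentially"
    unfolding tel using filterlim_tendsto_add_at_top[OF tendsto_const[of "- B 0"] Binf]
    by (simp add: algebra_simps)
  have r1: "(\<lambda>t. (\<Sum>i\<in>{1..t}. a i) / (\<Sum>i\<in>{1..t}. b i)) \<longlonglongrightarrow> 1"
  proof (rule sum_ratio_tendsto[where c = "\<lambda>i. a i / b i"])
    show "(\<lambda>i. a i / b i) \<longlonglongrightarrow> 1" using lim by (simp add: b_def)
    show "\<forall>\<^sub>F i in sequentially. 0 \<le> b i" using pos by eventually_elim (simp add: b_def)
    show "\<forall>\<^sub>F i in sequentially. a i = a i / b i * b i" using pos by eventually_elim (simp add: b_def)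
  qed (rule Sinf)
  have r2: "(\<lambda>t. (\<Sum>i\<in>{1..t}. b i) / B t) \<longlonglongrightarrow> 1"
  proof -
    have "(\<lambda>t. B 0 / B t) \<longlonglongrightarrow> 0"
      by (rule tendsto_divide_0[OF tendsto_const filterlim_at_top_imp_at_infinity[OF Binf]])
    then have "(\<lambda>t. 1 - B 0 / B t) \<longlonglongrightarrow> 1 - 0" by (intro tendsto_diff tendsto_const)
    moreover have "eventually (\<lambda>t. 1 - B 0 / B t = (\<Sum>i\<in>{1..t}. b i) / B t) sequentially"
      using Binf unfolding filterlim_at_top
      by (rule allE[where x = 1]) (elim eventually_mono, unfold tel, simp add: field_simps)
    ultimately show ?thesis by (simp add: Lim_transform_eventually)
  qed
  have "eventually (\<lambda>t. (\<Sum>i\<in>{1..t}. b i) \<ge> 1 \<and> B t \<ge> 1) sequentially"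
    using Sinf Binf unfolding filterlim_at_top by (intro eventually_conj) auto
  then have "eventually (\<lambda>t. (\<Sum>i\<in>{1..t}. a i) / (\<Sum>i\<in>{1..t}. b i) * ((\<Sum>i\<in>{1..t}. b i) / B t) = (\<Sum>i\<in>{1..t}. a i) / B t) sequentially"
    by eventually_elim simp
  moreover have "(\<lambda>t. (\<Sum>i\<in>{1..t}. a i) / (\<Sum>i\<in>{1..t}. b i) * ((\<Sum>i\<in>{1..t}. b i) / B t)) \<longlonglongrightarrow> 1"
    using tendsto_mult[OF r1 r2] by simp
  ultimately show ?thesis by (rule Lim_transform_eventually[rotated])
qed

lemma asy1:
  "(\<lambda>i. (1 / (real i * ln (1 + real i))) / (ln (ln (real i)) - ln (ln (real (i - 1))))) \<longlonglongrightarrow> 1"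
  "eventually (\<lambda>i::nat. ln (ln (real i)) - ln (ln (real (i - 1))) > 0) sequentially"
  "filterlim (\<lambda>i::nat. ln (ln (real i))) at_top sequentially"
proof -
  have e: "eventually (\<lambda>i::nat. real (i - 1) = real i - 1) sequentially"
    using eventually_ge_at_top[of "1::nat"] by eventually_elim auto
  have "(\<lambda>i::nat. (1 / (real i * ln (1 + real i))) / (ln (ln (real i)) - ln (ln (real i - 1)))) \<longlonglongrightarrow> 1"
    by real_asymp
  then show "(\<lambda>i. (1 / (real i * ln (1 + real i))) / (ln (ln (real i)) - ln (ln (real (i - 1))))) \<longlonglongrightarrow> 1"
    by (rule Lim_transform_eventually) (use e in \<open>eventually_elim, simp\<close>)
  have "eventually (\<lambda>i::nat. ln (ln (real i)) - ln (ln (real i - 1)) > 0) sequentially"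
    by real_asymp
  then show "eventually (\<lambda>i::nat. ln (ln (real i)) - ln (ln (real (i - 1))) > 0) sequentially"
    using e by eventually_elim simp
  show "filterlim (\<lambda>i::nat. ln (ln (real i))) at_top sequentially" by real_asymp
qed

lemma asy2:
  "(\<lambda>i. (1 / sqrt (real i * ln (1 + real i))) / (2 * sqrt (real i / ln (real i)) - 2 * sqrt (real (i - 1) / ln (real (i - 1))))) \<longlonglongrightarrow> 1"
  "eventually (\<lambda>i::nat. 2 * sqrt (real i / ln (real i)) - 2 * sqrt (real (i - 1) / ln (real (i - 1))) > 0) sequentially"
  "filterlim (\<lambda>i::nat. 2 * sqrt (real i / ln (real i))) at_top sequentially"
proof -
  have e: "eventually (\<lambda>i::nat. real (i - 1) = real i - 1) sequentially"
    using eventually_ge_at_top[of "1::nat"] by eventually_elim auto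
  have "(\<lambda>i::nat. (1 / sqrt (real i * ln (1 + real i))) / (2 * sqrt (real i / ln (real i)) - 2 * sqrt ((real i - 1) / ln (real i - 1)))) \<longlonglongrightarrow> 1"
    by real_asymp
  then show "(\<lambda>i. (1 / sqrt (real i * ln (1 + real i))) / (2 * sqrt (real i / ln (real i)) - 2 * sqrt (real (i - 1) / ln (real (i - 1))))) \<longlonglongrightarrow> 1"
    by (rule Lim_transform_eventually) (use e in \<open>eventually_elim, simp\<close>)
  have "eventually (\<lambda>i::nat. 2 * sqrt (real i / ln (real i)) - 2 * sqrt ((real i - 1) / ln (real i - 1)) > 0) sequentially"
    by real_asymp
  then show "eventually (\<lambda>i::nat. 2 * sqrt (real i / ln (real i)) - 2 * sqrt (real (i - 1) / ln (real (i - 1))) > 0) sequentially"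
    using e by eventually_elim simp
  show "filterlim (\<lambda>i::nat. 2 * sqrt (real i / ln (real i))) at_top sequentially" by real_asymp
qed



lemma slln_bounded:
  fixes M :: "'a measure" and Y :: "nat \<Rightarrow> 'a \<Rightarrow> real"
  assumes P: "prob_space M"
   and indep: "prob_space.indep_vars M (\<lambda>_. borel) Y {1..}"
   and ident: "\<And>i. i \<ge> 1 \<Longrightarrow> distr M borel (Y i) = distr M borel (Y 1)"
   and range: "\<And>i \<omega>. i \<ge> 1 \<Longrightarrow> \<omega> \<in> space M \<Longrightarrow> Y i \<omega> \<in> {0..1}"
  shows "AE \<omega> in M. (\<lambda>t. (\<Sum>i\<in>{1..t}. Y i \<omega>) / real t) \<longlonglongrightarrow> prob_space.expectation M (Y 1)"
proof -
  interpret prob_space M by (rule P)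
  define \<mu> where "\<mu> = expectation (Y 1)"
  have rv: "random_variable borel (Y i)" if "i \<ge> 1" for i
    using indep that unfolding indep_vars_def by auto
  have hoef: "prob {x\<in>space M. \<bar>(\<Sum>i\<in>{1..n}. Y i x) / real n - \<mu>\<bar> \<ge> \<epsilon>} \<le> 2 * exp (-2 * real n * \<epsilon>\<^sup>2)"
    if "\<epsilon> \<ge> 0" "n \<ge> 1" for n \<epsilon>
  proof -
    interpret H: Hoeffding_ineq_iid M "{1..n}" Y "Y 1" 0 1 \<mu>
    proof unfold_locales
      show "indep_vars (\<lambda>_. borel) Y {1..n}"
        by (rule indep_vars_subset[OF indep]) auto
      show "distr M borel (Y i) = distr M borel (Y 1)" if "i \<in> {1..n}" for i
        using that by (intro ident) auto
      show "random_variable borel (Y 1)" by (rule rv) simp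
      show "AE x in M. Y 1 x \<in> {0..1}" using range[of 1] by auto
    qed (simp_all add: \<mu>_def)
    show ?thesis using H.Hoeffding_ineq_abs_ge'[of \<epsilon>] that by simp
  qed
  have ev: "AE \<omega> in M. eventually (\<lambda>n. \<bar>(\<Sum>i\<in>{1..n}. Y i \<omega>) / real n - \<mu>\<bar> < 1 / (1 + real k)) sequentially"
    for k :: nat
  proof -
    define \<epsilon> :: real where "\<epsilon> = 1 / (1 + real k)"
    have \<epsilon>: "\<epsilon> > 0" by (simp add: \<epsilon>_def)
    define A where "A n = {x\<in>space M. \<bar>(\<Sum>i\<in>{1..n}. Y i x) / real n - \<mu>\<bar> \<ge> \<epsilon>}" for n
    have meas: "A n \<in> sets M" for n
    proof -
      have "(\<lambda>x. (\<Sum>i\<in>{1..n}. Y i x)) \<in> borel_measurable M"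
        using rv by (intro borel_measurable_sum) auto
      then show ?thesis unfolding A_def by measurable
    qed
    have bound: "measure M (A n) \<le> 2 * exp (-2 * \<epsilon>\<^sup>2) ^ n" for n
    proof (cases "n = 0")
      case True
      have "measure M (A n) \<le> 1" by simp
      moreover have "2 * exp (-2 * \<epsilon>\<^sup>2) ^ n = 2" using True by simp
      ultimately show ?thesis by linarith
    next
      case False
      then have "measure M (A n) \<le> 2 * exp (-2 * real n * \<epsilon>\<^sup>2)"
        unfolding A_def using \<epsilon> by (intro hoef) auto
      also have "exp (-2 * real n * \<epsilon>\<^sup>2) = exp (-2 * \<epsilon>\<^sup>2) ^ n"
        by (simp add: exp_of_nat_mult[symmetric] mult_ac)
      finally show ?thesis by simp
    qed
    have "summable (\<lambda>n. measure M (A n))"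
    proof (rule summable_comparison_test')
      show "summable (\<lambda>n. 2 * exp (-2 * \<epsilon>\<^sup>2) ^ n)"
        using \<epsilon> by (intro summable_mult summable_geometric) auto
      show "norm (measure M (A n)) \<le> 2 * exp (-2 * \<epsilon>\<^sup>2) ^ n" for n
        using bound[of n] by simp
    qed
    then have "AE x in M. eventually (\<lambda>n. x \<in> space M - A n) sequentially"
      by (intro borel_cantelli_AE1 meas) (auto simp: emeasure_eq_measure)
    then show ?thesis
      by (rule AE_mp) (auto simp: A_def \<epsilon>_def elim!: eventually_mono intro!: AE_I2)
  qed
  then have "AE \<omega> in M. \<forall>k::nat. eventually (\<lambda>n. \<bar>(\<Sum>i\<in>{1..n}. Y i \<omega>) / real n - \<mu>\<bar> < 1 / (1 + real k)) sequentially"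
    by (subst AE_all_countable) auto
  then show ?thesis
  proof (rule AE_mp, intro AE_I2 impI)
    fix \<omega> assume h: "\<forall>k::nat. eventually (\<lambda>n. \<bar>(\<Sum>i\<in>{1..n}. Y i \<omega>) / real n - \<mu>\<bar> < 1 / (1 + real k)) sequentially"
    show "(\<lambda>t. (\<Sum>i\<in>{1..t}. Y i \<omega>) / real t) \<longlonglongrightarrow> expectation (Y 1)"
      unfolding \<mu>_def[symmetric]
    proof (rule tendstoI)
      fix e :: real assume e: "e > 0"
      obtain k :: nat where k: "1 / (1 + real k) < e"
      proof -
        obtain k :: nat where "1 / e < real k" using reals_Archimedean2 by blast
        then have "1 / (1 + real k) < e" using e by (simp add: field_simps)
        then show ?thesis by (rule that)
      qed
      show "eventually (\<lambda>n. dist ((\<Sum>i\<in>{1..n}. Y i \<omega>) / real n) \<mu> < e) sequentially"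
        using h[rule_format, of k] by (elim eventually_mono) (use k in \<open>auto simp: dist_real_def\<close>)
    qed
  qed
qed



lemma cesaro_conv:
  fixes a :: "nat \<Rightarrow> real"
  assumes "a \<longlonglongrightarrow> l"
  shows "(\<lambda>t. (\<Sum>i\<in>{1..t}. a i) / real t) \<longlonglongrightarrow> l"
proof -
  have "(\<lambda>t. (\<Sum>i\<in>{1..t}. a i) / (\<Sum>i\<in>{1..t}. (1::real))) \<longlonglongrightarrow> l"
    by (rule sum_ratio_tendsto[where c = a]) (use assms filterlim_real_sequentially in auto)
  then show ?thesis by simp
qed

lemma cesaro_perturb:
  fixes a b e :: "nat \<Rightarrow> real"
  assumes A: "(\<lambda>t. (\<Sum>i\<in>{1..t}. a i) / real t) \<longlonglongrightarrow> l" and e: "e \<longlonglongrightarrow> 0"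
    and ev: "eventually (\<lambda>i. \<bar>b i - a i\<bar> \<le> e i) sequentially"
  shows "(\<lambda>t. (\<Sum>i\<in>{1..t}. b i) / real t) \<longlonglongrightarrow> l"
proof -
  have "(\<lambda>i. b i - a i) \<longlonglongrightarrow> 0"
    by (rule Lim_null_comparison[OF _ e]) (use ev in auto)
  then have "(\<lambda>t. (\<Sum>i\<in>{1..t}. b i - a i) / real t) \<longlonglongrightarrow> 0" by (rule cesaro_conv)
  from tendsto_add[OF A this] have "(\<lambda>t. (\<Sum>i\<in>{1..t}. a i) / real t + (\<Sum>i\<in>{1..t}. b i - a i) / real t) \<longlonglongrightarrow> l"
    by simp
  moreover have "(\<Sum>i\<in>{1..t}. a i) / real t + (\<Sum>i\<in>{1..t}. b i - a i) / real t = (\<Sum>i\<in>{1..t}. b i) / real t" for t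
    by (simp add: sum_subtractf add_divide_distrib[symmetric])
  ultimately show ?thesis by simp
qed

lemma LIMSEQ_minus1:
  fixes f :: "nat \<Rightarrow> real"
  assumes "f \<longlonglongrightarrow> l"
  shows "(\<lambda>i. f (i - 1)) \<longlonglongrightarrow> l"
  by (rule LIMSEQ_offset[where k = 1]) (use assms in simp)

lemma avg_shift:
  fixes A :: "nat \<Rightarrow> real"
  assumes "(\<lambda>t. A t / real t) \<longlonglongrightarrow> l"
  shows "(\<lambda>t. (c + A t) / (real t + 1)) \<longlonglongrightarrow> l"
proof -
  have 1: "(\<lambda>t::nat. c / (real t + 1)) \<longlonglongrightarrow> 0" by real_asymp
  have 2: "(\<lambda>t::nat. real t / (real t + 1)) \<longlonglongrightarrow> 1" by real_asymp
  have "(\<lambda>t. c / (real t + 1) + A t / real t * (real t / (real t + 1))) \<longlonglongrightarrow> 0 + l * 1"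
    by (intro tendsto_intros 1 2 assms)
  moreover have "eventually (\<lambda>t. c / (real t + 1) + A t / real t * (real t / (real t + 1)) = (c + A t) / (real t + 1)) sequentially"
    using eventually_ge_at_top[of "1::nat"]
  proof eventually_elim
    case (elim t)
    then have "A t / real t * (real t / (real t + 1)) = A t / (real t + 1)" by simp
    then show ?case by (simp add: add_divide_distrib)
  qed
  ultimately show ?thesis by (simp add: Lim_transform_eventually)
qed

lemma final_asy:
  fixes C :: real
  assumes "C > 0"
  shows "(\<lambda>t::nat. C * ln (ln (real t)) / (2 * sqrt (real t / ln (real t)))) \<sim>[at_top]
         (\<lambda>t. C * (1/2) * sqrt (ln (real t) / real t) * (1 + ln (ln (real t))))"
  using assms by real_asymp

lemma psi_lim: "((\<lambda>x. psiE x / x^2) \<longlongrightarrow> 1/2) (at_right 0)"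
  unfolding psiE_def by real_asymp



lemma deterministic:
  fixes X :: "nat \<Rightarrow> 'a \<Rightarrow> real" and \<omega> :: 'a and \<alpha> \<sigma> \<mu> m :: real
  assumes range: "\<And>i. i \<ge> 1 \<Longrightarrow> X i \<omega> \<in> {0..1}"
    and m1: "(\<lambda>t. (\<Sum>i\<in>{1..t}. X i \<omega>) / real t) \<longlonglongrightarrow> \<mu>"
    and m2: "(\<lambda>t. (\<Sum>i\<in>{1..t}. (X i \<omega>)^2) / real t) \<longlonglongrightarrow> m"
    and var: "m - \<mu>^2 = \<sigma>^2" and \<sigma>: "\<sigma> > 0" and \<alpha>: "0 < \<alpha>" "\<alpha> < 1"
  shows "(\<lambda>t. W_wsr \<alpha> X t \<omega>) \<sim>[at_top]
           (\<lambda>t. \<sigma> / 2 * sqrt (ln (2 / \<alpha>) * ln (real t) / (2 * real t)) * (1 + ln (ln (real t))))"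
proof -
  define L where "L = ln (2 / \<alpha>)"
  have L: "L > 0" unfolding L_def using \<alpha> by (intro ln_gt_zero) (simp add: field_simps)
  define mh where "mh t = mu_hat X t \<omega>" for t
  define sh where "sh t = sigma2_hat X t \<omega>" for t
  define lam where "lam i = lambda_wsr \<alpha> X i \<omega>" for i
  define Y where "Y i = (X i \<omega> - mh (i - 1))^2" for i
  define v where "v i = 1 / sqrt (real i * ln (1 + real i))" for i :: nat
  define w where "w i = 1 / (real i * ln (1 + real i))" for i :: nat
  have mh_lim: "mh \<longlonglongrightarrow> \<mu>"
    unfolding mh_def mu_hat_def by (rule avg_shift[OF m1])
  have mh1_lim: "(\<lambda>i. mh (i - 1)) \<longlonglongrightarrow> \<mu>" by (rule LIMSEQ_minus1[OF mh_lim])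
  have cX2: "(\<lambda>t. (\<Sum>i\<in>{1..t}. (X i \<omega> - \<mu>)^2) / real t) \<longlonglongrightarrow> \<sigma>^2"
  proof -
    have "(\<lambda>t. (\<Sum>i\<in>{1..t}. (X i \<omega>)^2) / real t - 2 * \<mu> * ((\<Sum>i\<in>{1..t}. X i \<omega>) / real t) + \<mu>^2)
          \<longlonglongrightarrow> m - 2 * \<mu> * \<mu> + \<mu>^2"
      by (intro tendsto_intros m1 m2)
    moreover have "m - 2 * \<mu> * \<mu> + \<mu>^2 = \<sigma>^2" using var by (simp add: power2_eq_square)
    moreover have "eventually (\<lambda>t. (\<Sum>i\<in>{1..t}. (X i \<omega>)^2) / real t - 2 * \<mu> * ((\<Sum>i\<in>{1..t}. X i \<omega>) / real t) + \<mu>^2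
        = (\<Sum>i\<in>{1..t}. (X i \<omega> - \<mu>)^2) / real t) sequentially"
      using eventually_ge_at_top[of "1::nat"]
    proof eventually_elim
      case (elim t)
      have "(\<Sum>i\<in>{1..t}. (X i \<omega> - \<mu>)^2) = (\<Sum>i\<in>{1..t}. (X i \<omega>)^2) - 2 * \<mu> * (\<Sum>i\<in>{1..t}. X i \<omega>) + real t * \<mu>^2"
        by (simp add: power2_diff sum.distrib sum_subtractf sum_distrib_left mult_ac)
      then show ?case using elim by (simp add: field_simps)
    qed
    ultimately show ?thesis by (simp add: Lim_transform_eventually)
  qed
  have bnd: "\<bar>(X i \<omega> - a)^2 - (X i \<omega> - \<mu>)^2\<bar> \<le> \<bar>a - \<mu>\<bar> * (2 + \<bar>a\<bar> + \<bar>\<mu>\<bar>)" if "i \<ge> 1" for i a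
  proof -
    have x: "0 \<le> X i \<omega>" "X i \<omega> \<le> 1" using range[OF that] by auto
    have "(X i \<omega> - a)^2 - (X i \<omega> - \<mu>)^2 = (\<mu> - a) * (2 * X i \<omega> - a - \<mu>)"
      by (simp add: power2_eq_square algebra_simps)
    then have "\<bar>(X i \<omega> - a)^2 - (X i \<omega> - \<mu>)^2\<bar> = \<bar>a - \<mu>\<bar> * \<bar>2 * X i \<omega> - a - \<mu>\<bar>"
      by (simp add: abs_mult abs_minus_commute)
    also have "\<dots> \<le> \<bar>a - \<mu>\<bar> * (2 + \<bar>a\<bar> + \<bar>\<mu>\<bar>)"
      using x by (intro mult_left_mono) auto
    finally show ?thesis .
  qed
  have cY: "(\<lambda>t. (\<Sum>i\<in>{1..t}. Y i) / real t) \<longlonglongrightarrow> \<sigma>^2"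
  proof (rule cesaro_perturb[OF cX2])
    have "(\<lambda>i. \<bar>mh (i - 1) - \<mu>\<bar> * (2 + \<bar>mh (i - 1)\<bar> + \<bar>\<mu>\<bar>)) \<longlonglongrightarrow> \<bar>\<mu> - \<mu>\<bar> * (2 + \<bar>\<mu>\<bar> + \<bar>\<mu>\<bar>)"
      by (intro tendsto_intros mh1_lim)
    then show "(\<lambda>i. \<bar>mh (i - 1) - \<mu>\<bar> * (2 + \<bar>mh (i - 1)\<bar> + \<bar>\<mu>\<bar>)) \<longlonglongrightarrow> 0" by simp
    show "\<forall>\<^sub>F i in sequentially. \<bar>Y i - (X i \<omega> - \<mu>)\<^sup>2\<bar> \<le> \<bar>mh (i - 1) - \<mu>\<bar> * (2 + \<bar>mh (i - 1)\<bar> + \<bar>\<mu>\<bar>)"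
      using eventually_ge_at_top[of "1::nat"] by eventually_elim (simp add: Y_def bnd)
  qed
  have cZ: "(\<lambda>t. (\<Sum>i\<in>{1..t}. (X i \<omega> - mh i)^2) / real t) \<longlonglongrightarrow> \<sigma>^2"
  proof (rule cesaro_perturb[OF cX2])
    have "(\<lambda>i. \<bar>mh i - \<mu>\<bar> * (2 + \<bar>mh i\<bar> + \<bar>\<mu>\<bar>)) \<longlonglongrightarrow> \<bar>\<mu> - \<mu>\<bar> * (2 + \<bar>\<mu>\<bar> + \<bar>\<mu>\<bar>)"
      by (intro tendsto_intros mh_lim)
    then show "(\<lambda>i. \<bar>mh i - \<mu>\<bar> * (2 + \<bar>mh i\<bar> + \<bar>\<mu>\<bar>)) \<longlonglongrightarrow> 0" by simp
    show "\<forall>\<^sub>F i in sequentially. \<bar>(X i \<omega> - mh i)^2 - (X i \<omega> - \<mu>)\<^sup>2\<bar> \<le> \<bar>mh i - \<mu>\<bar> * (2 + \<bar>mh i\<bar> + \<bar>\<mu>\<bar>)"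
      using eventually_ge_at_top[of "1::nat"] by eventually_elim (simp add: bnd)
  qed
  have sh_lim: "sh \<longlonglongrightarrow> \<sigma>^2"
    unfolding sh_def sigma2_hat_def mh_def[symmetric] by (rule avg_shift[OF cZ])
  have sh1_lim: "(\<lambda>i. sh (i - 1)) \<longlonglongrightarrow> \<sigma>^2" by (rule LIMSEQ_minus1[OF sh_lim])
  define q where "q i = 2 * L / sh (i - 1)" for i
  define K where "K = sqrt (2 * L / \<sigma>^2)"
  have K: "K > 0" using L \<sigma> by (simp add: K_def)
  have q_lim: "q \<longlonglongrightarrow> 2 * L / \<sigma>^2"
    unfolding q_def using \<sigma> by (intro tendsto_intros sh1_lim) auto
  define c where "c i = sqrt (q i)" for i
  have c_lim: "c \<longlonglongrightarrow> K" unfolding c_def K_def by (intro tendsto_intros q_lim)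
  have v_lim: "v \<longlonglongrightarrow> 0" unfolding v_def by real_asymp
  have cv_lim: "(\<lambda>i. c i * v i) \<longlonglongrightarrow> 0" using tendsto_mult[OF c_lim v_lim] by simp
  have vpos: "v i > 0" if "i \<ge> 1" for i
    using that unfolding v_def by (auto intro!: ln_gt_zero)
  have wpos: "w i > 0" if "i \<ge> 1" for i
    using that unfolding w_def by (auto intro!: ln_gt_zero)
  have vw: "(v i)^2 = w i" if "i \<ge> 1" for i
  proof -
    have "real i * ln (1 + real i) > 0" using that by (auto intro!: ln_gt_zero)
    then show ?thesis unfolding v_def w_def by (simp add: power_divide)
  qed
  have half: "eventually (\<lambda>i. c i * v i < 1/2) sequentially"
    by (rule order_tendstoD(2)[OF cv_lim]) simp
  have lam_eq: "eventually (\<lambda>i. lam i = c i * v i) sequentially"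
    using half eventually_ge_at_top[of "1::nat"]
  proof eventually_elim
    case (elim i)
    have "2 * ln (2 / \<alpha>) / (sigma2_hat X (i - 1) \<omega> * real i * ln (1 + real i)) = q i / (real i * ln (1 + real i))"
      by (simp add: q_def sh_def L_def divide_divide_eq_left mult.assoc)
    then have "sqrt (2 * ln (2 / \<alpha>) / (sigma2_hat X (i - 1) \<omega> * real i * ln (1 + real i))) = c i * v i"
      by (simp add: c_def v_def real_sqrt_divide real_sqrt_mult)
    then show ?case using elim by (simp add: lam_def lambda_wsr_def)
  qed
  have c_pos: "eventually (\<lambda>i. c i > 0) sequentially"
    using order_tendstoD(1)[OF c_lim K] .
  have lam_pos: "eventually (\<lambda>i. lam i > 0) sequentially"
    using lam_eq c_pos eventually_ge_at_top[of "1::nat"] by eventually_elim (simp add: vpos)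
  have lam_lim: "lam \<longlonglongrightarrow> 0"
  proof (rule Lim_transform_eventually[OF cv_lim])
    show "eventually (\<lambda>i. c i * v i = lam i) sequentially" using lam_eq by (simp add: eq_commute)
  qed
  define B where "B t = 2 * sqrt (real t / ln (real t))" for t :: nat
  have Sv: "(\<lambda>t. (\<Sum>i\<in>{1..t}. v i) / B t) \<longlonglongrightarrow> 1"
    unfolding B_def v_def by (rule telescope_asymp) (use asy2 in auto)
  have Binf: "filterlim B at_top sequentially" unfolding B_def by (rule asy2(3))
  have Sv_inf: "filterlim (\<lambda>t. \<Sum>i\<in>{1..t}. v i) at_top sequentially"
  proof -
    have A: "filterlim (\<lambda>t. (\<Sum>i\<in>{1..t}. v i) / B t * B t) at_top sequentially"
      by (rule filterlim_tendsto_pos_mult_at_top[OF Sv _ Binf]) simp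
    have E: "eventually (\<lambda>t. (\<Sum>i\<in>{1..t}. v i) / B t * B t = (\<Sum>i\<in>{1..t}. v i)) sequentially"
      using Binf unfolding filterlim_at_top by (rule allE[where x = 1]) (elim eventually_mono, simp)
    show ?thesis using filterlim_cong[OF refl refl E] A by simp
  qed
  have D_ratio: "(\<lambda>t. (\<Sum>i\<in>{1..t}. lam i) / (\<Sum>i\<in>{1..t}. v i)) \<longlonglongrightarrow> K"
    by (rule sum_ratio_tendsto[OF c_lim _ lam_eq Sv_inf])
       (use eventually_ge_at_top[of "1::nat"] in \<open>eventually_elim, simp add: less_imp_le vpos\<close>)
  have D_equiv: "(\<lambda>t. \<Sum>i\<in>{1..t}. lam i) \<sim>[at_top] (\<lambda>t. K * B t)"
  proof -
    have "(\<lambda>t. \<Sum>i\<in>{1..t}. lam i) \<sim>[at_top] (\<lambda>t. K * (\<Sum>i\<in>{1..t}. v i))"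
      by (rule asymp_equivI'_const[OF D_ratio]) (use K in simp)
    also have "(\<lambda>t. K * (\<Sum>i\<in>{1..t}. v i)) \<sim>[at_top] (\<lambda>t. K * B t)"
      by (intro asymp_equiv_intros asymp_equivI' Sv)
    finally show ?thesis .
  qed
  define C where "C t = ln (ln (real t))" for t :: nat
  have Sw: "(\<lambda>t. (\<Sum>i\<in>{1..t}. w i) / C t) \<longlonglongrightarrow> 1"
    unfolding C_def w_def by (rule telescope_asymp) (use asy1 in auto)
  have Cinf: "filterlim C at_top sequentially" unfolding C_def by (rule asy1(3))
  have Sw_inf: "filterlim (\<lambda>t. \<Sum>i\<in>{1..t}. w i) at_top sequentially"
  proof -
    have A: "filterlim (\<lambda>t. (\<Sum>i\<in>{1..t}. w i) / C t * C t) at_top sequentially"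
      by (rule filterlim_tendsto_pos_mult_at_top[OF Sw _ Cinf]) simp
    have E: "eventually (\<lambda>t. (\<Sum>i\<in>{1..t}. w i) / C t * C t = (\<Sum>i\<in>{1..t}. w i)) sequentially"
      using Cinf unfolding filterlim_at_top by (rule allE[where x = 1]) (elim eventually_mono, simp)
    show ?thesis using filterlim_cong[OF refl refl E] A by simp
  qed
  have wdec: "w (Suc i) \<le> w i" if "i \<ge> 1" for i
  proof -
    have "real i * ln (1 + real i) > 0" using that by (auto intro!: ln_gt_zero)
    moreover have "real i * ln (1 + real i) \<le> real (Suc i) * ln (1 + real (Suc i))"
      using that by (intro mult_mono) auto
    ultimately show ?thesis unfolding w_def using that by (intro divide_left_mono mult_pos_pos) auto
  qed
  have YW: "(\<lambda>t. (\<Sum>i\<in>{1..t}. Y i * w i) / (\<Sum>i\<in>{1..t}. w i)) \<longlonglongrightarrow> \<sigma>^2"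
    by (rule weighted_cesaro[OF cY wpos wdec Sw_inf])
  have YW_inf: "filterlim (\<lambda>t. \<Sum>i\<in>{1..t}. Y i * w i) at_top sequentially"
  proof -
    have A: "filterlim (\<lambda>t. (\<Sum>i\<in>{1..t}. Y i * w i) / (\<Sum>i\<in>{1..t}. w i) * (\<Sum>i\<in>{1..t}. w i)) at_top sequentially"
      by (rule filterlim_tendsto_pos_mult_at_top[OF YW _ Sw_inf]) (use \<sigma> in simp)
    have E: "eventually (\<lambda>t. (\<Sum>i\<in>{1..t}. Y i * w i) / (\<Sum>i\<in>{1..t}. w i) * (\<Sum>i\<in>{1..t}. w i) = (\<Sum>i\<in>{1..t}. Y i * w i)) sequentially"
      using Sw_inf unfolding filterlim_at_top by (rule allE[where x = 1]) (elim eventually_mono, simp)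
    show ?thesis using filterlim_cong[OF refl refl E] A by simp
  qed
  have lam_at: "filterlim lam (at_right 0) sequentially"
    by (rule tendsto_imp_filterlim_at_right[OF lam_lim lam_pos])
  have g_lim: "(\<lambda>i. psiE (lam i) / (lam i)^2) \<longlonglongrightarrow> 1/2"
    by (rule filterlim_compose[OF psi_lim lam_at])
  define r where "r i = psiE (lam i) / w i" for i
  have r_lim: "r \<longlonglongrightarrow> L / \<sigma>^2"
  proof -
    have "(\<lambda>i. psiE (lam i) / (lam i)^2 * (c i)^2) \<longlonglongrightarrow> 1/2 * K^2"
      by (intro tendsto_intros g_lim c_lim)
    moreover have "1/2 * K^2 = L / \<sigma>^2" using L \<sigma> by (simp add: K_def)
    moreover have "eventually (\<lambda>i. psiE (lam i) / (lam i)^2 * (c i)^2 = r i) sequentially"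
      using lam_eq lam_pos eventually_ge_at_top[of "1::nat"]
    proof eventually_elim
      case (elim i)
      have "(lam i)^2 = (c i)^2 * w i" using elim vw[of i] by (simp add: power_mult_distrib)
      moreover have "c i \<noteq> 0" using elim by auto
      ultimately show ?case using elim wpos[of i] by (simp add: r_def field_simps)
    qed
    ultimately show ?thesis by (simp add: Lim_transform_eventually)
  qed
  have N_ratio: "(\<lambda>t. (\<Sum>i\<in>{1..t}. Y i * psiE (lam i)) / (\<Sum>i\<in>{1..t}. Y i * w i)) \<longlonglongrightarrow> L / \<sigma>^2"
  proof (rule sum_ratio_tendsto[OF r_lim _ _ YW_inf])
    show "\<forall>\<^sub>F i in sequentially. 0 \<le> Y i * w i"
      using eventually_ge_at_top[of "1::nat"] by eventually_elim (simp add: Y_def less_imp_le wpos)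
    show "\<forall>\<^sub>F i in sequentially. Y i * psiE (lam i) = r i * (Y i * w i)"
      using eventually_ge_at_top[of "1::nat"]
    proof eventually_elim
      case (elim i)
      then have "w i \<noteq> 0" using wpos[of i] by simp
      then show ?case by (simp add: r_def)
    qed
  qed
  define N where "N t = L + (\<Sum>i\<in>{1..t}. Y i * psiE (lam i))" for t
  have N_lim: "(\<lambda>t. N t / (\<Sum>i\<in>{1..t}. w i)) \<longlonglongrightarrow> L"
  proof -
    have L0: "(\<lambda>t. L / (\<Sum>i\<in>{1..t}. w i)) \<longlonglongrightarrow> 0"
      by (rule tendsto_divide_0[OF tendsto_const filterlim_at_top_imp_at_infinity[OF Sw_inf]])
    have "(\<lambda>t. L / (\<Sum>i\<in>{1..t}. w i) + (\<Sum>i\<in>{1..t}. Y i * psiE (lam i)) / (\<Sum>i\<in>{1..t}. Y i * w i) * ((\<Sum>i\<in>{1..t}. Y i * w i) / (\<Sum>i\<in>{1..t}. w i)))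
       \<longlonglongrightarrow> 0 + L / \<sigma>^2 * \<sigma>^2"
      by (intro tendsto_intros L0 N_ratio YW)
    moreover have "0 + L / \<sigma>^2 * \<sigma>^2 = L" using \<sigma> by simp
    moreover have "eventually (\<lambda>t. L / (\<Sum>i\<in>{1..t}. w i) + (\<Sum>i\<in>{1..t}. Y i * psiE (lam i)) / (\<Sum>i\<in>{1..t}. Y i * w i) * ((\<Sum>i\<in>{1..t}. Y i * w i) / (\<Sum>i\<in>{1..t}. w i))
       = N t / (\<Sum>i\<in>{1..t}. w i)) sequentially"
    proof -
      have "eventually (\<lambda>t. (\<Sum>i\<in>{1..t}. Y i * w i) \<ge> 1) sequentially"
        using YW_inf unfolding filterlim_at_top by (rule allE)
      then show ?thesis
      proof eventually_elim
        case (elim t)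
        then have "(\<Sum>i\<in>{1..t}. Y i * w i) \<noteq> 0" by simp
        then have "(\<Sum>i\<in>{1..t}. Y i * psiE (lam i)) / (\<Sum>i\<in>{1..t}. Y i * w i) * ((\<Sum>i\<in>{1..t}. Y i * w i) / (\<Sum>i\<in>{1..t}. w i))
          = (\<Sum>i\<in>{1..t}. Y i * psiE (lam i)) / (\<Sum>i\<in>{1..t}. w i)" by simp
        then show ?case unfolding N_def by (simp add: add_divide_distrib)
      qed
    qed
    ultimately show ?thesis by (simp add: Lim_transform_eventually)
  qed
  have N_equiv: "N \<sim>[at_top] (\<lambda>t. L * C t)"
  proof -
    have "N \<sim>[at_top] (\<lambda>t. L * (\<Sum>i\<in>{1..t}. w i))"
      by (rule asymp_equivI'_const[OF N_lim]) (use L in simp)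
    also have "(\<lambda>t. L * (\<Sum>i\<in>{1..t}. w i)) \<sim>[at_top] (\<lambda>t. L * C t)"
      by (intro asymp_equiv_intros asymp_equivI' Sw)
    finally show ?thesis .
  qed
  have W_eq: "(\<lambda>t. W_wsr \<alpha> X t \<omega>) = (\<lambda>t. N t / (\<Sum>i\<in>{1..t}. lam i))"
    unfolding W_wsr_def N_def L_def Y_def mh_def lam_def ..
  have "(\<lambda>t. W_wsr \<alpha> X t \<omega>) \<sim>[at_top] (\<lambda>t. (L * C t) / (K * B t))"
    unfolding W_eq by (intro asymp_equiv_intros N_equiv D_equiv)
  also have "(\<lambda>t. (L * C t) / (K * B t)) = (\<lambda>t. (L / K) * ln (ln (real t)) / (2 * sqrt (real t / ln (real t))))"
    by (simp add: C_def B_def)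
  also have "\<dots> \<sim>[at_top] (\<lambda>t. (L / K) * (1/2) * sqrt (ln (real t) / real t) * (1 + ln (ln (real t))))"
    by (rule final_asy) (use L K in simp)
  also have "(\<lambda>t. (L / K) * (1/2) * sqrt (ln (real t) / real t) * (1 + ln (ln (real t)))) =
     (\<lambda>t. \<sigma> / 2 * sqrt (ln (2 / \<alpha>) * ln (real t) / (2 * real t)) * (1 + ln (ln (real t))))"
  proof -
    have LK: "L / K = \<sigma> * sqrt (L / 2)"
    proof -
      have Keq: "K = sqrt 2 * sqrt L / \<sigma>" using \<sigma> by (simp add: K_def real_sqrt_divide real_sqrt_mult)
      have sL: "sqrt L > 0" using L by simp
      have "L / K = L * \<sigma> / (sqrt 2 * sqrt L)" unfolding Keq by simp
      also have "L * \<sigma> / (sqrt 2 * sqrt L) = sqrt L * \<sigma> / sqrt 2"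
      proof -
        have "L = sqrt L * sqrt L" using L by simp
        then have "L * \<sigma> / (sqrt 2 * sqrt L) = sqrt L * sqrt L * \<sigma> / (sqrt 2 * sqrt L)" by simp
        also have "\<dots> = sqrt L * \<sigma> / sqrt 2" using sL by (simp add: field_simps)
        finally show ?thesis .
      qed
      also have "\<dots> = \<sigma> * sqrt (L / 2)" by (simp add: real_sqrt_divide)
      finally show ?thesis .
    qed
    have "sqrt (L * ln (real t) / (2 * real t)) = sqrt (L / 2) * sqrt (ln (real t) / real t)" for t
      by (simp add: real_sqrt_mult[symmetric])
    then show ?thesis by (simp add: LK L_def[symmetric] mult_ac)
  qed
  finally show ?thesis .
qed



theorem mainTheorem11:
  fixes M :: "'a measure" and X :: "nat \<Rightarrow> 'a \<Rightarrow> real" and \<alpha> \<sigma> :: real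
  assumes "prob_space M"
    and meas: "\<And>i. i \<ge> 1 \<Longrightarrow> X i \<in> borel_measurable M"
    and indep: "prob_space.indep_vars M (\<lambda>_. borel) X {1..}"
    and ident: "\<And>i. i \<ge> 1 \<Longrightarrow> distr M borel (X i) = distr M borel (X 1)"
    and range: "\<And>i \<omega>. i \<ge> 1 \<Longrightarrow> \<omega> \<in> space M \<Longrightarrow> X i \<omega> \<in> {0..1}"
    and var: "prob_space.variance M (X 1) = \<sigma>^2" and "\<sigma> > 0"
    and "0 < \<alpha>" "\<alpha> < 1"
  shows "AE \<omega> in M. (\<lambda>t. W_wsr \<alpha> X t \<omega>) \<sim>[at_top]
           (\<lambda>t. \<sigma> / 2 * sqrt (ln (2 / \<alpha>) * ln (real t) / (2 * real t)) * (1 + ln (ln (real t))))"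
proof -
  interpret prob_space M by fact
  define X2 where "X2 i \<omega> = (X i \<omega>)^2" for i \<omega>
  have X2i: "X2 i = (\<lambda>\<omega>. (X i \<omega>)^2)" for i by (simp add: X2_def fun_eq_iff)
  have m1: "AE \<omega> in M. (\<lambda>t. (\<Sum>i\<in>{1..t}. X i \<omega>) / real t) \<longlonglongrightarrow> expectation (X 1)"
    by (rule slln_bounded[OF \<open>prob_space M\<close> indep ident range]) auto
  have m2: "AE \<omega> in M. (\<lambda>t. (\<Sum>i\<in>{1..t}. X2 i \<omega>) / real t) \<longlonglongrightarrow> expectation (X2 1)"
  proof (rule slln_bounded[OF \<open>prob_space M\<close>])
    show "indep_vars (\<lambda>_. borel) X2 {1..}"
      unfolding X2_def by (rule indep_vars_compose2[OF indep, where Y = "\<lambda>_ x. x^2"]) auto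
    show "distr M borel (X2 i) = distr M borel (X2 1)" if "i \<ge> 1" for i
    proof -
      have "distr M borel (X2 i) = distr (distr M borel (X i)) borel (\<lambda>x. x^2)"
        using meas[OF that] by (subst distr_distr) (auto simp: X2i comp_def)
      also have "\<dots> = distr (distr M borel (X 1)) borel (\<lambda>x. x^2)" using ident[OF that] by simp
      also have "\<dots> = distr M borel (X2 1)"
        using meas[of 1] by (subst distr_distr) (auto simp: X2i comp_def)
      finally show ?thesis .
    qed
    show "X2 i \<omega> \<in> {0..1}" if "i \<ge> 1" "\<omega> \<in> space M" for i \<omega>
      using range[OF that] by (auto simp: X2_def power_le_one)
  qed
  have int1: "integrable M (X 1)"
    by (rule integrable_const_bound[where B = 1]) (use range[of 1] meas[of 1] in auto)
  have int2: "integrable M (\<lambda>x. (X 1 x)^2)"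
    by (rule integrable_const_bound[where B = 1]) (use range[of 1] meas[of 1] in \<open>auto simp: power_le_one\<close>)
  have v: "expectation (X2 1) - (expectation (X 1))^2 = \<sigma>^2"
    using var variance_eq[OF int1 int2] by (simp add: X2i)
  show ?thesis
    using AE_space m1 m2
  proof eventually_elim
    case (elim \<omega>)
    show ?case
      by (rule deterministic[where X = X and \<omega> = \<omega>, OF _ elim(2) elim(3)[unfolded X2_def] v[unfolded X2_def]])
         (use range elim(1) assms in auto)
  qed
qed

end
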